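(* Let $\mathscr{H}$ be a complex Hilbert space and let $N(\cdot)$ be a norm on $\mathbb{B}(\mathscr{H})$ which is an algebra norm ($N(XY)\leq N(X)N(Y)$ for all $X,Y$) and self-adjoint ($N(X^* )=N(X)$ for all $X$). Then for all $B,C\in\mathbb{B}(\mathscr{H})$, $$\frac18N(C^*C+B^*B)+\frac12\max\{w_N(B+C),w_N(B-C)\}\,|w_N(B)-w_N(C)|\leq w_{(N,e)}^2(B,C).$$
   Context: For $T\in\mathbb{B}(\mathscr{H})$: $\Re(T)=\frac12(T+T^* )$ and $w_N(T)=\sup_{\theta\in\mathbb{R}}N(\Re(e^{i\theta}T))$. For $B,C\in\mathbb{B}(\mathscr{H})$, $w_{(N,e)}(B,C)=\sup_{\lambda_1,\lambda_2\in\mathbb{C},\ |\lambda_1|^2+|\lambda_2|^2\leq 1}\sup_{\theta\in\mathbb{R}} N(\Re(e^{i\theta}(\lambda_1B+\lambda_2C)))$. *)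

theory Defs
  imports "HOL-Analysis.Analysis"
begin

text \<open>The inner product is linear in the second and conjugate-linear in the first argument.\<close>

class complex_inner = real_normed_vector +
  fixes scaleC :: "complex \<Rightarrow> 'a \<Rightarrow> 'a"  (infixr \<open>*\<^sub>C\<close> 75)
  fixes cinner :: "'a \<Rightarrow> 'a \<Rightarrow> complex"
  assumes scaleC_add_right: "a *\<^sub>C (x + y) = a *\<^sub>C x + a *\<^sub>C y"
    and scaleC_add_left: "(a + b) *\<^sub>C x = a *\<^sub>C x + b *\<^sub>C x"
    and scaleC_scaleC: "a *\<^sub>C (b *\<^sub>C x) = (a * b) *\<^sub>C x"
    and scaleC_one: "1 *\<^sub>C x = x"
    and scaleR_scaleC: "scaleR r x = complex_of_real r *\<^sub>C x"
    and cinner_commute: "cinner x y = cnj (cinner y x)"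
    and cinner_add_left: "cinner (x + y) z = cinner x z + cinner y z"
    and cinner_scaleC_left: "cinner (a *\<^sub>C x) y = cnj a * cinner x y"
    and cinner_self_real_nonneg: "Im (cinner x x) = 0 \<and> 0 \<le> Re (cinner x x)"
    and cinner_self_eq_zero: "cinner x x = 0 \<longleftrightarrow> x = 0"
    and norm_eq_sqrt_cinner: "norm x = sqrt (Re (cinner x x))"

class chilbert_space = complex_inner + complete_space

text \<open>Elements of B(H) are represented as functions H \<Rightarrow> H that are complex linear and bounded.\<close>

definition bounded_clinear :: "('a::complex_inner \<Rightarrow> 'a) \<Rightarrow> bool" where
  "bounded_clinear T \<longleftrightarrow>
     (\<forall>x y. T (x + y) = T x + T y) \<and> (\<forall>c x. T (c *\<^sub>C x) = c *\<^sub>C T x) \<and>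
     (\<exists>K. \<forall>x. norm (T x) \<le> norm x * K)"

text \<open>Hilbert space adjoint (exists and is unique for bounded operators on a Hilbert space).\<close>
definition cadjoint :: "('a::complex_inner \<Rightarrow> 'a) \<Rightarrow> ('a \<Rightarrow> 'a)" where
  "cadjoint T = (SOME S. \<forall>x y. cinner (T x) y = cinner x (S y))"

definition is_norm_BH :: "(('a::complex_inner \<Rightarrow> 'a) \<Rightarrow> real) \<Rightarrow> bool" where
  "is_norm_BH N \<longleftrightarrow>
     (\<forall>T. bounded_clinear T \<longrightarrow> 0 \<le> N T) \<and>
     (\<forall>T. bounded_clinear T \<longrightarrow> (N T = 0 \<longleftrightarrow> T = (\<lambda>_. 0))) \<and>
     (\<forall>T c. bounded_clinear T \<longrightarrow> N (\<lambda>x. c *\<^sub>C T x) = cmod c * N T) \<and>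
     (\<forall>T S. bounded_clinear T \<longrightarrow> bounded_clinear S \<longrightarrow> N (\<lambda>x. T x + S x) \<le> N T + N S)"

definition algebra_norm_BH :: "(('a::complex_inner \<Rightarrow> 'a) \<Rightarrow> real) \<Rightarrow> bool" where
  "algebra_norm_BH N \<longleftrightarrow>
     (\<forall>X Y. bounded_clinear X \<longrightarrow> bounded_clinear Y \<longrightarrow> N (X \<circ> Y) \<le> N X * N Y)"

definition selfadjoint_norm_BH :: "(('a::complex_inner \<Rightarrow> 'a) \<Rightarrow> real) \<Rightarrow> bool" where
  "selfadjoint_norm_BH N \<longleftrightarrow> (\<forall>X. bounded_clinear X \<longrightarrow> N (cadjoint X) = N X)"

definition ReOp :: "('a::complex_inner \<Rightarrow> 'a) \<Rightarrow> ('a \<Rightarrow> 'a)" where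
  "ReOp T = (\<lambda>x. (1/2) *\<^sub>C (T x + cadjoint T x))"

definition wN :: "(('a::complex_inner \<Rightarrow> 'a) \<Rightarrow> real) \<Rightarrow> ('a \<Rightarrow> 'a) \<Rightarrow> real" where
  "wN N T = (SUP \<theta>::real. N (ReOp (\<lambda>x. exp (\<i> * complex_of_real \<theta>) *\<^sub>C T x)))"

definition wNe :: "(('a::complex_inner \<Rightarrow> 'a) \<Rightarrow> real) \<Rightarrow> ('a \<Rightarrow> 'a) \<Rightarrow> ('a \<Rightarrow> 'a) \<Rightarrow> real" where
  "wNe N B C = (SUP l \<in> {(l1, l2). (cmod l1)^2 + (cmod l2)^2 \<le> 1}.
      SUP \<theta>::real. N (ReOp (\<lambda>x. exp (\<i> * complex_of_real \<theta>) *\<^sub>C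
                               (fst l *\<^sub>C B x + snd l *\<^sub>C C x))))"

end

theory Submission imports Defs begin

lemma scaleC_zero_left[simp]: "(0::complex) *\<^sub>C (x::'a::complex_inner) = 0"
proof -
  have "(0::complex) *\<^sub>C x = 0 *\<^sub>C x + 0 *\<^sub>C x" using scaleC_add_left[of 0 0 x] by simp
  then show ?thesis by simp
qed

lemma scaleC_zero_right[simp]: "a *\<^sub>C (0::'a::complex_inner) = 0"
proof -
  have "a *\<^sub>C (0::'a) = a *\<^sub>C 0 + a *\<^sub>C 0" using scaleC_add_right[of a 0 0] by simp
  then show ?thesis by simp
qed

lemma scaleC_minus_one: "(-1) *\<^sub>C (x::'a::complex_inner) = - x"
  using scaleR_scaleC[of "-1" x] by simp

lemma scaleC_minus_right: "a *\<^sub>C (- (x::'a::complex_inner)) = - (a *\<^sub>C x)"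
proof -
  have "a *\<^sub>C (- x) + a *\<^sub>C x = 0" using scaleC_add_right[of a "-x" x] by simp
  then show ?thesis by (simp add: eq_neg_iff_add_eq_0)
qed

lemma scaleC_diff_right: "a *\<^sub>C ((x::'a::complex_inner) - y) = a *\<^sub>C x - a *\<^sub>C y"
  using scaleC_add_right[of a x "-y"] scaleC_minus_right[of a y] by simp

lemma scaleC_minus_left: "(- a) *\<^sub>C (x::'a::complex_inner) = - (a *\<^sub>C x)"
proof -
  have "(- a) *\<^sub>C x + a *\<^sub>C x = 0" using scaleC_add_left[of "-a" a x] by simp
  then show ?thesis by (simp add: eq_neg_iff_add_eq_0)
qed

lemma scaleC_diff_left: "(a - b) *\<^sub>C (x::'a::complex_inner) = a *\<^sub>C x - b *\<^sub>C x"
  using scaleC_add_left[of a "-b" x] scaleC_minus_left[of b x] by simp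

lemma cinner_add_right: "cinner (x::'a::complex_inner) (y + z) = cinner x y + cinner x z"
  by (metis cinner_commute cinner_add_left complex_cnj_add)

lemma cinner_scaleC_right: "cinner (x::'a::complex_inner) (a *\<^sub>C y) = a * cinner x y"
  by (metis cinner_commute cinner_scaleC_left complex_cnj_cnj complex_cnj_mult)

lemma cinner_zero_left[simp]: "cinner (0::'a::complex_inner) y = 0"
  using cinner_scaleC_left[of 0 "0::'a" y] by simp

lemma cinner_zero_right[simp]: "cinner (x::'a::complex_inner) 0 = 0"
  using cinner_scaleC_right[of x 0 "0::'a"] by simp

lemma cinner_minus_left: "cinner (- (x::'a::complex_inner)) y = - cinner x y"
  using cinner_scaleC_left[of "-1" x y] by (simp add: scaleC_minus_one)

lemma cinner_minus_right: "cinner (x::'a::complex_inner) (- y) = - cinner x y"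
  using cinner_scaleC_right[of x "-1" y] by (simp add: scaleC_minus_one)

lemma cinner_diff_left: "cinner ((x::'a::complex_inner) - y) z = cinner x z - cinner y z"
  using cinner_add_left[of x "-y" z] cinner_minus_left[of y z] by simp

lemma cinner_diff_right: "cinner (x::'a::complex_inner) (y - z) = cinner x y - cinner x z"
  using cinner_add_right[of x y "-z"] cinner_minus_right[of x z] by simp

lemma cinner_self: "cinner (x::'a::complex_inner) x = complex_of_real ((norm x)^2)"
proof -
  have "Im (cinner x x) = 0" "0 \<le> Re (cinner x x)" using cinner_self_real_nonneg by auto
  then show ?thesis using norm_eq_sqrt_cinner[of x] by (simp add: complex_eq_iff)
qed

lemma norm_sq_cinner: "(norm (x::'a::complex_inner))^2 = Re (cinner x x)"
  by (simp add: cinner_self)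

lemma norm_scaleC: "norm (a *\<^sub>C (x::'a::complex_inner)) = cmod a * norm x"
proof -
  have "cinner (a *\<^sub>C x) (a *\<^sub>C x) = (cnj a * a) * cinner x x"
    by (simp add: cinner_scaleC_left cinner_scaleC_right)
  also have "cnj a * a = complex_of_real ((cmod a)^2)"
    by (metis complex_norm_square mult.commute)
  finally have "complex_of_real ((norm (a *\<^sub>C x))^2) = complex_of_real ((cmod a)^2) * complex_of_real ((norm x)^2)"
    by (simp only: cinner_self)
  then have "(norm (a *\<^sub>C x))^2 = (cmod a * norm x)^2"
    by (metis of_real_eq_iff of_real_mult power_mult_distrib)
  then show ?thesis by (simp add: power2_eq_iff_nonneg)
qed

lemma norm_add_sq: "(norm ((x::'a::complex_inner) + y))^2 = (norm x)^2 + (norm y)^2 + 2 * Re (cinner x y)"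
proof -
  have "Re (cinner y x) = Re (cinner x y)" by (subst cinner_commute) simp
  then show ?thesis by (simp add: norm_sq_cinner cinner_add_left cinner_add_right)
qed

lemma norm_diff_sq: "(norm ((x::'a::complex_inner) - y))^2 = (norm x)^2 + (norm y)^2 - 2 * Re (cinner x y)"
proof -
  have "Re (cinner y x) = Re (cinner x y)" by (subst cinner_commute) simp
  then show ?thesis by (simp add: norm_sq_cinner cinner_diff_left cinner_diff_right)
qed

lemma norm_add_scaleC_sq: "(norm ((x::'a::complex_inner) + t *\<^sub>C y))^2 = (norm x)^2 + 2 * Re (t * cinner x y) + (cmod t)^2 * (norm y)^2"
  by (simp add: norm_add_sq norm_scaleC cinner_scaleC_right power_mult_distrib)

lemma Re_cinner_le: "Re (cinner (x::'a::complex_inner) y) \<le> norm x * norm y"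
proof (cases "x = 0 \<or> y = 0")
  case True then show ?thesis by auto
next
  case False
  then have nx: "norm x > 0" and ny: "norm y > 0" by auto
  have "0 \<le> (norm (complex_of_real (norm y) *\<^sub>C x - complex_of_real (norm x) *\<^sub>C y))^2" by simp
  also have "\<dots> = 2 * (norm x)^2 * (norm y)^2 - 2 * norm x * norm y * Re (cinner x y)"
    by (simp add: norm_diff_sq norm_scaleC cinner_scaleC_left cinner_scaleC_right power_mult_distrib algebra_simps)
  finally have "norm x * norm y * Re (cinner x y) \<le> norm x * norm y * (norm x * norm y)"
    by (simp add: power2_eq_square algebra_simps)
  then show ?thesis using nx ny by (simp add: mult_le_cancel_left_pos)
qed

lemma cinner_cauchy_schwarz: "cmod (cinner (x::'a::complex_inner) y) \<le> norm x * norm y"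
proof (cases "cinner x y = 0")
  case True then show ?thesis by simp
next
  case False
  define c where "c = cinner x y"
  define w where "w = cnj c / complex_of_real (cmod c)"
  have cw: "cmod w = 1" using False by (simp add: w_def c_def norm_divide)
  have "cinner x (w *\<^sub>C y) = complex_of_real (cmod c)"
  proof -
    have "cinner x (w *\<^sub>C y) = cnj c * c / complex_of_real (cmod c)"
      by (simp add: cinner_scaleC_right w_def c_def)
    also have "cnj c * c = complex_of_real (cmod c) * complex_of_real (cmod c)"
      by (metis complex_norm_square mult.commute of_real_mult power2_eq_square)
    also have "\<dots> / complex_of_real (cmod c) = complex_of_real (cmod c)"
      using False c_def by simp
    finally show ?thesis .
  qed
  then have "cmod c = Re (cinner x (w *\<^sub>C y))" by simp
  also have "\<dots> \<le> norm x * norm (w *\<^sub>C y)" by (rule Re_cinner_le)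
  also have "\<dots> = norm x * norm y" by (simp add: norm_scaleC cw)
  finally show ?thesis unfolding c_def .
qed


lemma cinner_eq_zero_iff_all: "(\<forall>z. cinner z (x::'a::complex_inner) = cinner z y) \<Longrightarrow> x = y"
proof -
  assume h: "\<forall>z. cinner z x = cinner z y"
  have e: "cinner (x - y) x = cinner (x - y) y" using h by blast
  have "cinner (x - y) (x - y) = cinner (x - y) x - cinner (x - y) y" by (rule cinner_diff_right)
  also have "\<dots> = 0" unfolding e by (rule diff_self)
  finally have "cinner (x - y) (x - y) = 0" .
  then have "x - y = 0" using cinner_self_eq_zero by blast
  then show "x = y" by (rule right_minus_eq[THEN iffD1])
qed

lemma Im_zero_if_cmod_Re: "cmod z = Re z \<Longrightarrow> z = complex_of_real (Re z)"
proof -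
  assume h: "cmod z = Re z"
  have "(cmod z)^2 = (Re z)^2 + (Im z)^2" by (simp add: cmod_def)
  then have "Im z = 0" using h by simp
  then show ?thesis by (simp add: complex_eq_iff)
qed

lemma riesz:
  fixes f :: "'a::chilbert_space \<Rightarrow> complex"
  assumes add: "\<And>x y. f (x + y) = f x + f y"
    and hom: "\<And>c x. f (c *\<^sub>C x) = c * f x"
    and bnd: "\<And>x. cmod (f x) \<le> K * norm x"
  shows "\<exists>z. \<forall>x. f x = cinner z x"
proof (cases "\<forall>x. f x = 0")
  case True
  then show ?thesis by (intro exI[of _ 0]) simp
next
  case False
  then obtain x0 where x0: "f x0 \<noteq> 0" by auto
  have f0: "f 0 = 0" using hom[of 0 0] by simp
  have fdiff: "f (x - y) = f x - f y" for x y
    using add[of "x - y" y] by simp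
  have x0n: "x0 \<noteq> 0" using x0 f0 by auto
  have Kpos: "K > 0"
  proof -
    have "0 < cmod (f x0)" using x0 by simp
    also have "\<dots> \<le> K * norm x0" by (rule bnd)
    finally show ?thesis using x0n by (simp add: zero_less_mult_iff)
  qed
  define U where "U = {x::'a. norm x \<le> 1}"
  define s where "s = (SUP x\<in>U. cmod (f x))"
  have U0: "0 \<in> U" by (simp add: U_def)
  have bdd: "bdd_above ((\<lambda>x. cmod (f x)) ` U)"
  proof (rule bdd_aboveI2)
    fix x assume "x \<in> U"
    then have "K * norm x \<le> K * 1" using Kpos by (simp add: U_def)
    then show "cmod (f x) \<le> K" using bnd[of x] by simp
  qed
  have normalize: "norm (complex_of_real (1 / norm y) *\<^sub>C y) = 1" if "y \<noteq> 0" for y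
    using that by (simp add: norm_scaleC norm_divide)
  have S1: "cmod (f y) \<le> s * norm y" for y
  proof (cases "y = 0")
    case True then show ?thesis using f0 by simp
  next
    case False
    let ?u = "complex_of_real (1 / norm y) *\<^sub>C y"
    have "?u \<in> U" using normalize[OF False] by (simp add: U_def)
    then have "cmod (f ?u) \<le> s" unfolding s_def by (rule cSUP_upper[OF _ bdd])
    moreover have "cmod (f ?u) = cmod (f y) / norm y" using hom by (simp add: norm_mult norm_divide)
    ultimately show ?thesis using False by (simp add: divide_le_eq mult.commute)
  qed
  have spos: "s > 0"
  proof -
    have "0 < cmod (f x0)" using x0 by simp
    also have "\<dots> \<le> s * norm x0" by (rule S1)
    finally show ?thesis using x0n by (simp add: zero_less_mult_iff)
  qed
  have "\<exists>x. norm x \<le> 1 \<and> s - 1 / real (Suc n) < Re (f x)" for n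
  proof -
    have "s - 1 / real (Suc n) < s" by simp
    then obtain x where xU: "x \<in> U" and xl: "s - 1 / real (Suc n) < cmod (f x)"
      unfolding s_def using less_cSUP_iff[OF _ bdd] U0 by blast
    define w where "w = (if f x = 0 then 1 else cnj (f x) / complex_of_real (cmod (f x)))"
    have cw: "cmod w = 1" by (simp add: w_def norm_divide)
    have "f (w *\<^sub>C x) = complex_of_real (cmod (f x))"
    proof (cases "f x = 0")
      case True then show ?thesis by (simp add: hom w_def)
    next
      case False
      have "f (w *\<^sub>C x) = cnj (f x) * f x / complex_of_real (cmod (f x))"
        using False by (simp add: hom w_def)
      also have "cnj (f x) * f x = complex_of_real (cmod (f x)) * complex_of_real (cmod (f x))"
        by (metis complex_norm_square mult.commute of_real_mult power2_eq_square)
      also have "\<dots> / complex_of_real (cmod (f x)) = complex_of_real (cmod (f x))"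
        using False by simp
      finally show ?thesis .
    qed
    then have "Re (f (w *\<^sub>C x)) = cmod (f x)" by simp
    moreover have "norm (w *\<^sub>C x) \<le> 1" using xU cw by (simp add: norm_scaleC U_def)
    ultimately show ?thesis using xl by (intro exI[of _ "w *\<^sub>C x"]) simp
  qed
  then obtain X where Xn: "\<And>n. norm (X n) \<le> 1" and Xf: "\<And>n. s - 1 / real (Suc n) < Re (f (X n))"
    by metis
  have close: "(norm (X n - X m))^2 \<le> 4 * ((1 / real (Suc n) + 1 / real (Suc m)) / s)" for n m
  proof -
    define d where "d = (1 / real (Suc n) + 1 / real (Suc m)) / s"
    define t where "t = norm (X n + X m)"
    have "2 * s - s * d < Re (f (X n)) + Re (f (X m))"
      using Xf[of n] Xf[of m] spos by (simp add: d_def)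
    also have "\<dots> = Re (f (X n + X m))" by (simp add: add)
    also have "\<dots> \<le> cmod (f (X n + X m))" by (rule complex_Re_le_cmod)
    also have "\<dots> \<le> s * t" unfolding t_def by (rule S1)
    finally have "s * (2 - d) < s * t" by (simp add: algebra_simps)
    then have t1: "2 - d < t" using spos by simp
    have t2: "t \<le> 2" unfolding t_def using norm_triangle_ineq[of "X n" "X m"] Xn[of n] Xn[of m] by simp
    have t3: "0 \<le> t" by (simp add: t_def)
    have par: "(norm (X n - X m))^2 = 2 * (norm (X n))^2 + 2 * (norm (X m))^2 - t^2"
      by (simp add: t_def norm_add_sq norm_diff_sq)
    have "(norm (X n))^2 \<le> 1" "(norm (X m))^2 \<le> 1"
      using Xn[of n] Xn[of m] by (simp_all add: power_le_one)
    then have "(norm (X n - X m))^2 \<le> 4 - t^2" using par by simp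
    also have "\<dots> = (2 - t) * (2 + t)" by (simp add: power2_eq_square algebra_simps)
    also have "\<dots> \<le> d * 4" using t1 t2 t3 by (intro mult_mono) auto
    finally show ?thesis by (simp add: d_def)
  qed
  have "Cauchy X"
  proof (rule CauchyI)
    fix e :: real assume e: "0 < e"
    obtain M where M: "8 / (e^2 * s) < real (Suc M)"
      using reals_Archimedean2 by (metis less_Suc_eq of_nat_Suc order_less_trans lessI of_nat_less_iff)
    have Mp: "8 / real (Suc M) < e^2 * s"
      using M e spos by (simp add: field_simps)
    show "\<exists>M. \<forall>m\<ge>M. \<forall>n\<ge>M. norm (X m - X n) < e"
    proof (intro exI allI impI)
      fix m n assume mM: "M \<le> m" and nM: "M \<le> n"
      have a: "1 / real (Suc m) \<le> 1 / real (Suc M)" using mM by (simp add: frac_le)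
      have b: "1 / real (Suc n) \<le> 1 / real (Suc M)" using nM by (simp add: frac_le)
      have "(norm (X m - X n))^2 \<le> 4 * ((1 / real (Suc m) + 1 / real (Suc n)) / s)" by (rule close)
      also have "\<dots> \<le> 4 * ((2 / real (Suc M)) / s)"
      proof -
        have "(1 / real (Suc m) + 1 / real (Suc n)) / s \<le> (2 / real (Suc M)) / s"
          by (rule divide_right_mono) (use a b spos in auto)
        then show ?thesis by (rule mult_left_mono) simp
      qed
      also have "\<dots> = (8 / real (Suc M)) / s" by simp
      also have "\<dots> < e^2" by (subst pos_divide_less_eq[OF spos]) (rule Mp)
      finally have "(norm (X m - X n))^2 < e^2" .
      then show "norm (X m - X n) < e" using e by (simp add: power_less_imp_less_base)
    qed
  qed
  then obtain x where Xx: "X \<longlonglongrightarrow> x" using convergent_def Cauchy_convergent by blast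
  have xn: "norm x \<le> 1"
    using tendsto_norm[OF Xx] Xn by (intro Lim_bounded[where M=0]) auto
  have fX: "(\<lambda>n. f (X n)) \<longlonglongrightarrow> f x"
  proof -
    have "(\<lambda>n. K * norm (X n - x)) \<longlonglongrightarrow> K * 0"
      using Xx by (intro tendsto_mult tendsto_const) (simp add: LIM_zero_iff tendsto_norm_zero_iff)
    then have lim0: "(\<lambda>n. K * norm (X n - x)) \<longlonglongrightarrow> 0" by simp
    have ev: "\<forall>\<^sub>F n in sequentially. norm (f (X n) - f x) \<le> K * norm (X n - x)"
    proof (intro always_eventually allI)
      fix n
      have "f (X n) - f x = f (X n - x)" by (rule fdiff[symmetric])
      then show "norm (f (X n) - f x) \<le> K * norm (X n - x)" using bnd[of "X n - x"] by simp
    qed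
    have "(\<lambda>n. f (X n) - f x) \<longlonglongrightarrow> 0"
      by (rule Lim_null_comparison[OF ev lim0])
    then show ?thesis by (rule LIM_zero_cancel)
  qed
  have "s \<le> Re (f x)"
  proof (rule tendsto_le[OF _ tendsto_Re[OF fX]])
    show "(\<lambda>n. s - 1 / real (Suc n)) \<longlonglongrightarrow> s"
      using tendsto_diff[OF tendsto_const[of s] LIMSEQ_inverse_real_of_nat] by (simp add: inverse_eq_divide)
    show "\<forall>\<^sub>F n in sequentially. s - 1 / real (Suc n) \<le> Re (f (X n))"
      using Xf by (simp add: less_imp_le)
  qed simp
  have c1: "Re (f x) \<le> cmod (f x)" by (rule complex_Re_le_cmod)
  have c2: "cmod (f x) \<le> s * norm x" by (rule S1)
  have c3: "s * norm x \<le> s" using xn spos by simp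
  have xn1: "norm x = 1" using \<open>s \<le> Re (f x)\<close> c1 c2 c3 xn spos
    by (metis antisym mult.right_neutral mult_le_cancel_left_pos order_trans)
  have fxs: "f x = complex_of_real s"
  proof -
    have "cmod (f x) = Re (f x)" using \<open>s \<le> Re (f x)\<close> c1 c2 c3 by linarith
    then have "f x = complex_of_real (Re (f x))" by (rule Im_zero_if_cmod_Re)
    moreover have "Re (f x) = s" using \<open>s \<le> Re (f x)\<close> c1 c2 c3 by linarith
    ultimately show ?thesis by simp
  qed
  have orth: "cinner x y = 0" if fy: "f y = 0" for y
  proof (rule ccontr)
    assume cne: "cinner x y \<noteq> 0"
    define c where "c = cinner x y"
    have cp: "(cmod c)^2 > 0" using cne by (simp add: c_def)
    define t where "t = 1 / ((norm y)^2 + 1)"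
    have yp: "(norm y)^2 + 1 > 0" by (simp add: add_nonneg_pos)
    have tp: "t > 0" using yp by (simp add: t_def)
    have ty: "t * (norm y)^2 < 1" using yp by (simp add: t_def field_simps)
    define a where "a = - complex_of_real t * cnj c"
    have "f (x + a *\<^sub>C y) = complex_of_real s" using fxs fy by (simp add: add hom)
    then have "s \<le> s * norm (x + a *\<^sub>C y)" using S1[of "x + a *\<^sub>C y"] by simp
    then have "1 \<le> norm (x + a *\<^sub>C y)" using spos by simp
    then have "1 \<le> (norm (x + a *\<^sub>C y))^2" by (simp add: one_le_power)
    also have "\<dots> = 1 + 2 * Re (a * c) + (cmod a)^2 * (norm y)^2"
      by (simp add: norm_add_scaleC_sq xn1 c_def)
    also have "Re (a * c) = - t * (cmod c)^2"
      by (simp add: a_def cmod_def power2_eq_square algebra_simps)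
    also have "(cmod a)^2 = t^2 * (cmod c)^2"
      using tp by (simp add: a_def norm_mult power_mult_distrib)
    finally have "0 \<le> t * (cmod c)^2 * (t * (norm y)^2 - 2)"
      by (simp add: algebra_simps power2_eq_square)
    moreover have "t * (cmod c)^2 * (t * (norm y)^2 - 2) < 0"
      using tp cp ty by (intro mult_pos_neg) auto
    ultimately show False by simp
  qed
  show ?thesis
  proof (intro exI allI)
    fix v
    define y where "y = v - (f v / complex_of_real s) *\<^sub>C x"
    have "f y = 0" using spos by (simp add: y_def fdiff hom fxs)
    then have "cinner x y = 0" by (rule orth)
    then have "cinner x v = f v / complex_of_real s"
      by (simp add: y_def cinner_diff_right cinner_scaleC_right cinner_self xn1)
    then show "f v = cinner (complex_of_real s *\<^sub>C x) v"
      using spos by (simp add: cinner_scaleC_left)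
  qed
qed


lemma bcE:
  assumes "bounded_clinear T"
  shows "T (x + y) = T x + T y" "T (c *\<^sub>C x) = c *\<^sub>C T x"
  using assms unfolding bounded_clinear_def by auto

lemma bc_bound:
  assumes "bounded_clinear T"
  obtains K where "K > 0" "\<And>x. norm (T x) \<le> norm x * K"
proof -
  obtain K where K: "\<And>x. norm (T x) \<le> norm x * K" using assms unfolding bounded_clinear_def by auto
  have "norm (T x) \<le> norm x * max K 1" for x
    using K[of x] by (meson max.cobounded1 mult_left_mono norm_ge_zero order_trans)
  then show ?thesis using that[of "max K 1"] by auto
qed

lemma bc_intro:
  assumes "\<And>x y. T (x + y) = T x + T y" "\<And>c x. T (c *\<^sub>C x) = c *\<^sub>C T x"
    "\<And>x. norm (T x) \<le> norm x * K"
  shows "bounded_clinear T"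
  using assms unfolding bounded_clinear_def by blast

lemma adjoint_exists:
  fixes T :: "'a::chilbert_space \<Rightarrow> 'a"
  assumes "bounded_clinear T"
  shows "\<exists>S. \<forall>x y. cinner (T x) y = cinner x (S y)"
proof -
  obtain K where K: "\<And>x. norm (T x) \<le> norm x * K" using bc_bound[OF assms] by auto
  have "\<exists>z. \<forall>x. cinner (T x) y = cinner x z" for y
  proof -
    have "\<exists>z. \<forall>x. cinner y (T x) = cinner z x"
    proof (rule riesz[where K = "norm y * K"])
      show "cinner y (T (x1 + x2)) = cinner y (T x1) + cinner y (T x2)" for x1 x2
        by (simp add: bcE[OF assms] cinner_add_right)
      show "cinner y (T (c *\<^sub>C x)) = c * cinner y (T x)" for c x
        by (simp add: bcE[OF assms] cinner_scaleC_right)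
      show "cmod (cinner y (T x)) \<le> norm y * K * norm x" for x
      proof -
        have "cmod (cinner y (T x)) \<le> norm y * norm (T x)" by (rule cinner_cauchy_schwarz)
        also have "\<dots> \<le> norm y * (norm x * K)" by (rule mult_left_mono[OF K]) simp
        finally show ?thesis by (simp add: algebra_simps)
      qed
    qed
    then obtain z where "\<forall>x. cinner y (T x) = cinner z x" by blast
    then have "\<forall>x. cinner (T x) y = cinner x z" by (metis cinner_commute)
    then show ?thesis by blast
  qed
  then show ?thesis by metis
qed

lemma adj:
  fixes T :: "'a::chilbert_space \<Rightarrow> 'a"
  assumes "bounded_clinear T"
  shows "cinner (T x) y = cinner x (cadjoint T y)"
proof -
  have "\<forall>x y. cinner (T x) y = cinner x (cadjoint T y)"
    unfolding cadjoint_def by (rule someI_ex[OF adjoint_exists[OF assms]])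
  then show ?thesis by blast
qed

lemma adj_unique:
  fixes T :: "'a::chilbert_space \<Rightarrow> 'a"
  assumes "bounded_clinear T" "\<And>x y. cinner (T x) y = cinner x (S y)"
  shows "cadjoint T = S"
proof
  fix y
  show "cadjoint T y = S y"
    by (rule cinner_eq_zero_iff_all) (metis adj[OF assms(1)] assms(2))
qed

lemma adj_bounded:
  fixes T :: "'a::chilbert_space \<Rightarrow> 'a"
  assumes T: "bounded_clinear T"
  shows "bounded_clinear (cadjoint T)"
proof -
  obtain K where Kp: "K > 0" and K: "\<And>x. norm (T x) \<le> norm x * K" using bc_bound[OF T] by auto
  let ?S = "cadjoint T"
  show ?thesis
  proof (rule bc_intro)
    fix y1 y2
    show "?S (y1 + y2) = ?S y1 + ?S y2"
    proof (rule cinner_eq_zero_iff_all, intro allI)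
      fix z
      show "cinner z (?S (y1 + y2)) = cinner z (?S y1 + ?S y2)"
        by (simp add: adj[OF T, symmetric] cinner_add_right)
    qed
  next
    fix c y
    show "?S (c *\<^sub>C y) = c *\<^sub>C ?S y"
    proof (rule cinner_eq_zero_iff_all, intro allI)
      fix z
      show "cinner z (?S (c *\<^sub>C y)) = cinner z (c *\<^sub>C ?S y)"
        by (simp add: adj[OF T, symmetric] cinner_scaleC_right)
    qed
  next
    fix y
    show "norm (?S y) \<le> norm y * K"
    proof (cases "?S y = 0")
      case True then show ?thesis using Kp by simp
    next
      case False
      have "(norm (?S y))^2 = Re (cinner (T (?S y)) y)" by (simp add: norm_sq_cinner adj[OF T])
      also have "\<dots> \<le> cmod (cinner (T (?S y)) y)" by (rule complex_Re_le_cmod)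
      also have "\<dots> \<le> norm (T (?S y)) * norm y" by (rule cinner_cauchy_schwarz)
      also have "\<dots> \<le> (norm (?S y) * K) * norm y" by (rule mult_right_mono[OF K]) simp
      finally have "norm (?S y) * norm (?S y) \<le> norm (?S y) * (norm y * K)"
        by (simp add: power2_eq_square algebra_simps)
      then show ?thesis using False by simp
    qed
  qed
qed


lemma bc_add:
  assumes S: "bounded_clinear S" and T: "bounded_clinear T"
  shows "bounded_clinear (\<lambda>x. S x + T x)"
proof -
  obtain K1 where K1: "\<And>x. norm (S x) \<le> norm x * K1" using bc_bound[OF S] by auto
  obtain K2 where K2: "\<And>x. norm (T x) \<le> norm x * K2" using bc_bound[OF T] by auto
  show ?thesis
  proof (rule bc_intro)
    show "S (x + y) + T (x + y) = S x + T x + (S y + T y)" for x y by (simp add: bcE[OF S] bcE[OF T] add_ac)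
    show "S (c *\<^sub>C x) + T (c *\<^sub>C x) = c *\<^sub>C (S x + T x)" for c x by (simp add: bcE[OF S] bcE[OF T] scaleC_add_right)
    show "norm (S x + T x) \<le> norm x * (K1 + K2)" for x
      using norm_triangle_ineq[of "S x" "T x"] K1[of x] K2[of x] by (simp add: algebra_simps)
  qed
qed

lemma bc_scale:
  assumes T: "bounded_clinear T"
  shows "bounded_clinear (\<lambda>x. c *\<^sub>C T x)"
proof -
  obtain K where K: "\<And>x. norm (T x) \<le> norm x * K" using bc_bound[OF T] by auto
  show ?thesis
  proof (rule bc_intro)
    show "c *\<^sub>C T (x + y) = c *\<^sub>C T x + c *\<^sub>C T y" for x y by (simp add: bcE[OF T] scaleC_add_right)
    show "c *\<^sub>C T (d *\<^sub>C x) = d *\<^sub>C (c *\<^sub>C T x)" for d x by (simp add: bcE[OF T] scaleC_scaleC mult.commute)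
    show "norm (c *\<^sub>C T x) \<le> norm x * (cmod c * K)" for x
      using mult_left_mono[OF K[of x], of "cmod c"] by (simp add: norm_scaleC algebra_simps)
  qed
qed

lemma bc_neg:
  assumes T: "bounded_clinear T"
  shows "bounded_clinear (\<lambda>x. - T x)"
  using bc_scale[OF T, of "-1"] by (simp add: scaleC_minus_one)

lemma bc_comp:
  assumes S: "bounded_clinear S" and T: "bounded_clinear T"
  shows "bounded_clinear (S \<circ> T)"
proof -
  obtain K1 where K1p: "K1 > 0" and K1: "\<And>x. norm (S x) \<le> norm x * K1" using bc_bound[OF S] by auto
  obtain K2 where K2: "\<And>x. norm (T x) \<le> norm x * K2" using bc_bound[OF T] by auto
  show ?thesis
  proof (rule bc_intro)
    show "(S \<circ> T) (x + y) = (S \<circ> T) x + (S \<circ> T) y" for x y by (simp add: bcE[OF S] bcE[OF T])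
    show "(S \<circ> T) (c *\<^sub>C x) = c *\<^sub>C (S \<circ> T) x" for c x by (simp add: bcE[OF S] bcE[OF T])
    show "norm ((S \<circ> T) x) \<le> norm x * (K2 * K1)" for x
    proof -
      have "norm (S (T x)) \<le> norm (T x) * K1" by (rule K1)
      also have "\<dots> \<le> (norm x * K2) * K1" by (rule mult_right_mono[OF K2]) (use K1p in simp)
      finally show ?thesis by (simp add: algebra_simps)
    qed
  qed
qed

lemma adj_add:
  fixes S T :: "'a::chilbert_space \<Rightarrow> 'a"
  assumes S: "bounded_clinear S" and T: "bounded_clinear T"
  shows "cadjoint (\<lambda>x. S x + T x) = (\<lambda>y. cadjoint S y + cadjoint T y)"
  by (rule adj_unique[OF bc_add[OF S T]]) (simp add: cinner_add_left cinner_add_right adj[OF S] adj[OF T])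

lemma adj_scale:
  fixes T :: "'a::chilbert_space \<Rightarrow> 'a"
  assumes T: "bounded_clinear T"
  shows "cadjoint (\<lambda>x. c *\<^sub>C T x) = (\<lambda>y. cnj c *\<^sub>C cadjoint T y)"
  by (rule adj_unique[OF bc_scale[OF T]]) (simp add: cinner_scaleC_left cinner_scaleC_right adj[OF T])

lemma adj_neg:
  fixes T :: "'a::chilbert_space \<Rightarrow> 'a"
  assumes T: "bounded_clinear T"
  shows "cadjoint (\<lambda>x. - T x) = (\<lambda>y. - cadjoint T y)"
  by (rule adj_unique[OF bc_neg[OF T]]) (simp add: cinner_minus_left cinner_minus_right adj[OF T])

lemma ReOp_bounded:
  fixes T :: "'a::chilbert_space \<Rightarrow> 'a"
  assumes T: "bounded_clinear T"
  shows "bounded_clinear (ReOp T)"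
  unfolding ReOp_def by (rule bc_scale[OF bc_add[OF T adj_bounded[OF T]]])

lemma ReOp_add:
  fixes S T :: "'a::chilbert_space \<Rightarrow> 'a"
  assumes S: "bounded_clinear S" and T: "bounded_clinear T"
  shows "ReOp (\<lambda>x. S x + T x) = (\<lambda>x. ReOp S x + ReOp T x)"
  by (simp add: ReOp_def adj_add[OF S T] scaleC_add_right add_ac)

lemma ReOp_neg:
  fixes T :: "'a::chilbert_space \<Rightarrow> 'a"
  assumes T: "bounded_clinear T"
  shows "ReOp (\<lambda>x. - T x) = (\<lambda>x. - ReOp T x)"
  by (simp add: ReOp_def adj_neg[OF T] scaleC_diff_right scaleC_add_right scaleC_minus_right)

context
  fixes N :: "('a::chilbert_space \<Rightarrow> 'a) \<Rightarrow> real"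
  assumes nN: "is_norm_BH N"
begin

lemma N_nonneg: "bounded_clinear T \<Longrightarrow> 0 \<le> N T"
  using nN unfolding is_norm_BH_def by blast

lemma N_scale: "bounded_clinear T \<Longrightarrow> N (\<lambda>x. c *\<^sub>C T x) = cmod c * N T"
  using nN unfolding is_norm_BH_def by blast

lemma N_tri: "bounded_clinear S \<Longrightarrow> bounded_clinear T \<Longrightarrow> N (\<lambda>x. S x + T x) \<le> N S + N T"
  using nN unfolding is_norm_BH_def by blast

lemma N_neg: "bounded_clinear T \<Longrightarrow> N (\<lambda>x. - T x) = N T"
  using N_scale[of T "-1"] by (simp add: scaleC_minus_one)

lemma N_ReOp_le:
  assumes T: "bounded_clinear T" and sa: "selfadjoint_norm_BH N"
  shows "N (ReOp T) \<le> N T"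
proof -
  have TS: "bounded_clinear (cadjoint T)" by (rule adj_bounded[OF T])
  have "N (ReOp T) = cmod (1/2) * N (\<lambda>x. T x + cadjoint T x)"
    unfolding ReOp_def by (rule N_scale[OF bc_add[OF T TS]])
  also have "\<dots> \<le> (1/2) * (N T + N (cadjoint T))"
    using N_tri[OF T TS] by simp
  also have "N (cadjoint T) = N T" using sa T unfolding selfadjoint_norm_BH_def by blast
  finally show ?thesis by simp
qed

end


definition eth :: "real \<Rightarrow> complex" where "eth \<theta> = exp (\<i> * complex_of_real \<theta>)"

lemma cmod_eth[simp]: "cmod (eth \<theta>) = 1"
  unfolding eth_def by (simp add: norm_exp_i_times)

lemma wN_eth: "wN N T = (SUP \<theta>::real. N (ReOp (\<lambda>x. eth \<theta> *\<^sub>C T x)))"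
  unfolding wN_def eth_def ..

context
  fixes N :: "('a::chilbert_space \<Rightarrow> 'a) \<Rightarrow> real"
  assumes nN: "is_norm_BH N" and sa: "selfadjoint_norm_BH N"
begin

lemma wN_term_le:
  assumes T: "bounded_clinear T"
  shows "N (ReOp (\<lambda>x. eth \<theta> *\<^sub>C T x)) \<le> N T"
proof -
  have "N (ReOp (\<lambda>x. eth \<theta> *\<^sub>C T x)) \<le> N (\<lambda>x. eth \<theta> *\<^sub>C T x)"
    by (rule N_ReOp_le[OF nN bc_scale[OF T] sa])
  also have "\<dots> = N T" using N_scale[OF nN T, of "eth \<theta>"] by simp
  finally show ?thesis .
qed

lemma wN_bdd:
  assumes T: "bounded_clinear T"
  shows "bdd_above (range (\<lambda>\<theta>. N (ReOp (\<lambda>x. eth \<theta> *\<^sub>C T x))))"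
  by (rule bdd_aboveI2[where M = "N T"]) (rule wN_term_le[OF T])

lemma wN_upper:
  assumes T: "bounded_clinear T"
  shows "N (ReOp (\<lambda>x. eth \<theta> *\<^sub>C T x)) \<le> wN N T"
  unfolding wN_eth by (rule cSUP_upper[OF UNIV_I wN_bdd[OF T]])

lemma wN_least:
  assumes "\<And>\<theta>. N (ReOp (\<lambda>x. eth \<theta> *\<^sub>C T x)) \<le> M"
  shows "wN N T \<le> M"
  unfolding wN_eth by (rule cSUP_least) (use assms in auto)

lemma wN_le_N:
  assumes T: "bounded_clinear T"
  shows "wN N T \<le> N T"
  by (rule wN_least) (rule wN_term_le[OF T])

lemma wN_nonneg:
  assumes T: "bounded_clinear T"
  shows "0 \<le> wN N T"
proof -
  have "0 \<le> N (ReOp (\<lambda>x. eth 0 *\<^sub>C T x))"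
    by (rule N_nonneg[OF nN ReOp_bounded[OF bc_scale[OF T]]])
  also have "\<dots> \<le> wN N T" by (rule wN_upper[OF T])
  finally show ?thesis .
qed

lemma wN_add:
  assumes S: "bounded_clinear S" and T: "bounded_clinear T"
  shows "wN N (\<lambda>x. S x + T x) \<le> wN N S + wN N T"
proof (rule wN_least)
  fix \<theta>
  have eq: "(\<lambda>x. eth \<theta> *\<^sub>C (S x + T x)) = (\<lambda>x. eth \<theta> *\<^sub>C S x + eth \<theta> *\<^sub>C T x)"
    by (simp add: scaleC_add_right)
  have "N (ReOp (\<lambda>x. eth \<theta> *\<^sub>C (S x + T x)))
      = N (\<lambda>x. ReOp (\<lambda>x. eth \<theta> *\<^sub>C S x) x + ReOp (\<lambda>x. eth \<theta> *\<^sub>C T x) x)"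
    unfolding eq by (simp only: ReOp_add[OF bc_scale[OF S] bc_scale[OF T]])
  also have "\<dots> \<le> N (ReOp (\<lambda>x. eth \<theta> *\<^sub>C S x)) + N (ReOp (\<lambda>x. eth \<theta> *\<^sub>C T x))"
    by (rule N_tri[OF nN ReOp_bounded[OF bc_scale[OF S]] ReOp_bounded[OF bc_scale[OF T]]])
  also have "\<dots> \<le> wN N S + wN N T"
    by (rule add_mono[OF wN_upper[OF S] wN_upper[OF T]])
  finally show "N (ReOp (\<lambda>x. eth \<theta> *\<^sub>C (S x + T x))) \<le> wN N S + wN N T" .
qed

lemma wN_neg:
  assumes T: "bounded_clinear T"
  shows "wN N (\<lambda>x. - T x) \<le> wN N T"
proof (rule wN_least)
  fix \<theta>
  have eq: "(\<lambda>x. eth \<theta> *\<^sub>C (- T x)) = (\<lambda>x. - (eth \<theta> *\<^sub>C T x))"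
    by (simp add: scaleC_minus_right)
  have "N (ReOp (\<lambda>x. eth \<theta> *\<^sub>C (- T x))) = N (\<lambda>x. - ReOp (\<lambda>x. eth \<theta> *\<^sub>C T x) x)"
    unfolding eq by (simp only: ReOp_neg[OF bc_scale[OF T]])
  also have "\<dots> = N (ReOp (\<lambda>x. eth \<theta> *\<^sub>C T x))"
    by (rule N_neg[OF nN ReOp_bounded[OF bc_scale[OF T]]])
  also have "\<dots> \<le> wN N T" by (rule wN_upper[OF T])
  finally show "N (ReOp (\<lambda>x. eth \<theta> *\<^sub>C (- T x))) \<le> wN N T" .
qed

lemma wN_diff:
  assumes S: "bounded_clinear S" and T: "bounded_clinear T"
  shows "wN N (\<lambda>x. S x - T x) \<le> wN N S + wN N T"
proof -
  have "wN N (\<lambda>x. S x - T x) = wN N (\<lambda>x. S x + (\<lambda>x. - T x) x)" by simp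
  also have "\<dots> \<le> wN N S + wN N (\<lambda>x. - T x)" by (rule wN_add[OF S bc_neg[OF T]])
  also have "\<dots> \<le> wN N S + wN N T" using wN_neg[OF T] by simp
  finally show ?thesis .
qed

end


lemma eth0: "eth 0 = 1" by (simp add: eth_def)

lemma eth_mpi2: "eth (- (pi/2)) = - \<i>"
proof -
  have "eth (- (pi/2)) = cis (- (pi/2))" by (simp only: eth_def cis_conv_exp)
  also have "\<dots> = - \<i>" by (simp add: complex_eq_iff)
  finally show ?thesis .
qed

context
  fixes N :: "('a::chilbert_space \<Rightarrow> 'a) \<Rightarrow> real"
  assumes nN: "is_norm_BH N" and sa: "selfadjoint_norm_BH N"
begin

lemma N_le_2wN:
  assumes T: "bounded_clinear T"
  shows "N T \<le> 2 * wN N T"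
proof -
  define R0 where "R0 = ReOp (\<lambda>x. eth 0 *\<^sub>C T x)"
  define R1 where "R1 = ReOp (\<lambda>x. eth (- (pi/2)) *\<^sub>C T x)"
  have R0b: "bounded_clinear R0" unfolding R0_def by (rule ReOp_bounded[OF bc_scale[OF T]])
  have R1b: "bounded_clinear R1" unfolding R1_def by (rule ReOp_bounded[OF bc_scale[OF T]])
  have R0x: "R0 x = (1/2) *\<^sub>C T x + (1/2) *\<^sub>C cadjoint T x" for x
    by (simp add: R0_def eth0 ReOp_def scaleC_one scaleC_add_right)
  have R1x: "\<i> *\<^sub>C R1 x = (1/2) *\<^sub>C T x + (-1/2) *\<^sub>C cadjoint T x" for x
    by (simp add: R1_def eth_mpi2 ReOp_def adj_scale[OF T] scaleC_add_right scaleC_scaleC)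
  have eq: "T = (\<lambda>x. R0 x + (\<lambda>x. \<i> *\<^sub>C R1 x) x)"
  proof
    fix x
    have "R0 x + \<i> *\<^sub>C R1 x = ((1/2) *\<^sub>C T x + (1/2) *\<^sub>C T x) + ((1/2) *\<^sub>C cadjoint T x + (-1/2) *\<^sub>C cadjoint T x)"
      unfolding R0x R1x by (simp only: add_ac)
    also have "\<dots> = ((1/2) + (1/2)) *\<^sub>C T x + ((1/2) + (-1/2)) *\<^sub>C cadjoint T x"
      by (simp only: scaleC_add_left)
    also have "\<dots> = T x" by (simp add: scaleC_one)
    finally show "T x = R0 x + (\<lambda>x. \<i> *\<^sub>C R1 x) x" by simp
  qed
  have "N T \<le> N R0 + N (\<lambda>x. \<i> *\<^sub>C R1 x)"
    by (subst eq) (rule N_tri[OF nN R0b bc_scale[OF R1b]])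
  also have "N (\<lambda>x. \<i> *\<^sub>C R1 x) = N R1" using N_scale[OF nN R1b, of \<i>] by simp
  also have "N R0 \<le> wN N T" unfolding R0_def by (rule wN_upper[OF nN sa T])
  also have "N R1 \<le> wN N T" unfolding R1_def by (rule wN_upper[OF nN sa T])
  finally show ?thesis by simp
qed

lemma wNe_eq: "wNe N B C = (SUP l \<in> {(l1, l2). (cmod l1)^2 + (cmod l2)^2 \<le> 1}. wN N (\<lambda>x. fst l *\<^sub>C B x + snd l *\<^sub>C C x))"
  unfolding wNe_def wN_def ..

lemma wNe_ge:
  assumes B: "bounded_clinear B" and C: "bounded_clinear C"
  shows "wN N B \<le> wNe N B C" "wN N C \<le> wNe N B C"
proof -
  define D :: "(complex \<times> complex) set" where "D = {(l1, l2). (cmod l1)^2 + (cmod l2)^2 \<le> 1}"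
  have bdd: "bdd_above ((\<lambda>l. wN N (\<lambda>x. fst l *\<^sub>C B x + snd l *\<^sub>C C x)) ` D)"
  proof (rule bdd_aboveI2)
    fix l assume "l \<in> D"
    then obtain l1 l2 where l: "l = (l1, l2)" and h: "(cmod l1)^2 + (cmod l2)^2 \<le> 1" by (auto simp: D_def)
    have "(cmod l1)^2 \<le> 1" using h zero_le_power2[of "cmod l2"] by linarith
    then have h1: "cmod l1 \<le> 1" using abs_square_le_1[of "cmod l1"] by simp
    have "(cmod l2)^2 \<le> 1" using h zero_le_power2[of "cmod l1"] by linarith
    then have h2: "cmod l2 \<le> 1" using abs_square_le_1[of "cmod l2"] by simp
    have "wN N (\<lambda>x. l1 *\<^sub>C B x + l2 *\<^sub>C C x) \<le> N (\<lambda>x. l1 *\<^sub>C B x + l2 *\<^sub>C C x)"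
      by (rule wN_le_N[OF nN sa bc_add[OF bc_scale[OF B] bc_scale[OF C]]])
    also have "\<dots> \<le> N (\<lambda>x. l1 *\<^sub>C B x) + N (\<lambda>x. l2 *\<^sub>C C x)"
      by (rule N_tri[OF nN bc_scale[OF B] bc_scale[OF C]])
    also have "\<dots> = cmod l1 * N B + cmod l2 * N C"
      by (simp add: N_scale[OF nN B] N_scale[OF nN C])
    also have "\<dots> \<le> 1 * N B + 1 * N C"
      by (intro add_mono mult_right_mono h1 h2 N_nonneg[OF nN B] N_nonneg[OF nN C])
    finally show "wN N (\<lambda>x. fst l *\<^sub>C B x + snd l *\<^sub>C C x) \<le> N B + N C" by (simp add: l)
  qed
  have "(1::complex, 0::complex) \<in> D" by (simp add: D_def)
  from cSUP_upper[OF this bdd]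
  have "wN N (\<lambda>x. fst (1, 0) *\<^sub>C B x + snd (1, 0) *\<^sub>C C x) \<le> wNe N B C"
    unfolding wNe_eq D_def[symmetric] by simp
  then show "wN N B \<le> wNe N B C" by (simp add: scaleC_one)
  have "(0::complex, 1::complex) \<in> D" by (simp add: D_def)
  from cSUP_upper[OF this bdd]
  have "wN N (\<lambda>x. fst (0, 1) *\<^sub>C B x + snd (0, 1) *\<^sub>C C x) \<le> wNe N B C"
    unfolding wNe_eq D_def[symmetric] by simp
  then show "wN N C \<le> wNe N B C" by (simp add: scaleC_one)
qed

end


theorem corollary2p18:
  fixes N :: "('a::chilbert_space \<Rightarrow> 'a) \<Rightarrow> real" and B C :: "'a \<Rightarrow> 'a"
  assumes "is_norm_BH N" and "algebra_norm_BH N" and "selfadjoint_norm_BH N"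
    and "bounded_clinear B" and "bounded_clinear C"
  shows "(1/8) * N (\<lambda>x. cadjoint C (C x) + cadjoint B (B x))
          + (1/2) * max (wN N (\<lambda>x. B x + C x)) (wN N (\<lambda>x. B x - C x)) * \<bar>wN N B - wN N C\<bar>
         \<le> (wNe N B C)^2"
proof -
  note nN = assms(1) and al = assms(2) and sa = assms(3) and Bb = assms(4) and Cb = assms(5)
  define a where "a = wN N B"
  define b where "b = wN N C"
  define W where "W = wNe N B C"
  define X where "X = N (\<lambda>x. cadjoint C (C x) + cadjoint B (B x))"
  define p where "p = wN N (\<lambda>x. B x + C x)"
  define q where "q = wN N (\<lambda>x. B x - C x)"
  have a0: "0 \<le> a" unfolding a_def by (rule wN_nonneg[OF nN sa Bb])
  have b0: "0 \<le> b" unfolding b_def by (rule wN_nonneg[OF nN sa Cb])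
  have aW: "a \<le> W" unfolding a_def W_def by (rule wNe_ge(1)[OF nN sa Bb Cb])
  have bW: "b \<le> W" unfolding b_def W_def by (rule wNe_ge(2)[OF nN sa Bb Cb])
  have p0: "0 \<le> p" unfolding p_def by (rule wN_nonneg[OF nN sa bc_add[OF Bb Cb]])
  have q0: "0 \<le> q" unfolding q_def by (rule wN_nonneg[OF nN sa bc_add[OF Bb bc_neg[OF Cb]], simplified])
  have pab: "p \<le> a + b" unfolding p_def a_def b_def by (rule wN_add[OF nN sa Bb Cb])
  have qab: "q \<le> a + b" unfolding q_def a_def b_def by (rule wN_diff[OF nN sa Bb Cb])
  have NB: "N B \<le> 2 * a" unfolding a_def by (rule N_le_2wN[OF nN sa Bb])
  have NC: "N C \<le> 2 * b" unfolding b_def by (rule N_le_2wN[OF nN sa Cb])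
  have NB0: "0 \<le> N B" by (rule N_nonneg[OF nN Bb])
  have NC0: "0 \<le> N C" by (rule N_nonneg[OF nN Cb])
  have CSb: "bounded_clinear (cadjoint C)" by (rule adj_bounded[OF Cb])
  have BSb: "bounded_clinear (cadjoint B)" by (rule adj_bounded[OF Bb])
  have "X = N (\<lambda>x. (cadjoint C \<circ> C) x + (cadjoint B \<circ> B) x)" by (simp add: X_def)
  also have "\<dots> \<le> N (cadjoint C \<circ> C) + N (cadjoint B \<circ> B)"
    by (rule N_tri[OF nN bc_comp[OF CSb Cb] bc_comp[OF BSb Bb]])
  also have "N (cadjoint C \<circ> C) \<le> N (cadjoint C) * N C"
    using al CSb Cb unfolding algebra_norm_BH_def by blast
  also have "N (cadjoint B \<circ> B) \<le> N (cadjoint B) * N B"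
    using al BSb Bb unfolding algebra_norm_BH_def by blast
  also have "N (cadjoint C) = N C" using sa Cb unfolding selfadjoint_norm_BH_def by blast
  also have "N (cadjoint B) = N B" using sa Bb unfolding selfadjoint_norm_BH_def by blast
  finally have X1: "X \<le> N C * N C + N B * N B" by simp
  have "N C * N C \<le> (2 * b) * (2 * b)" using NC NC0 by (intro mult_mono) auto
  moreover have "N B * N B \<le> (2 * a) * (2 * a)" using NB NB0 by (intro mult_mono) auto
  ultimately have X2: "X \<le> 4 * a * a + 4 * b * b" using X1 by simp
  have M: "max p q \<le> a + b" using pab qab by simp
  have M0: "0 \<le> max p q" using p0 by simp
  have T2: "max p q * \<bar>a - b\<bar> \<le> (a + b) * \<bar>a - b\<bar>" by (rule mult_right_mono[OF M]) simp
  have fin: "(1/8) * X + (1/2) * max p q * \<bar>a - b\<bar> \<le> W^2"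
  proof (cases "a \<le> b")
    case True
    then have "(a + b) * \<bar>a - b\<bar> = b * b - a * a" by (simp add: algebra_simps abs_if)
    moreover have "b * b \<le> W * W" using b0 bW by (intro mult_mono) auto
    ultimately show ?thesis using X2 T2 by (simp add: power2_eq_square)
  next
    case False
    then have "(a + b) * \<bar>a - b\<bar> = a * a - b * b" by (simp add: algebra_simps abs_if)
    moreover have "a * a \<le> W * W" using a0 aW by (intro mult_mono) auto
    ultimately show ?thesis using X2 T2 by (simp add: power2_eq_square)
  qed
  then show ?thesis unfolding X_def p_def q_def a_def b_def W_def .
qed

end
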